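(* Let $p$ be a prime, let $m,n$ be positive integers, let $V_m$ and $V_n$ be $\mathbb{F}_p$-vector spaces of dimensions $m$ and $n$, each equipped with a nondegenerate inner product $\langle\cdot,\cdot\rangle$. Let $f:V_m\to\mathbb{F}_p$ and $g:V_n\to\mathbb{F}_p$ be bent functions and let $h:V_m\to V_n$ be any function. Define $F:V_m\times V_n\to\mathbb{F}_p$ by \[F(x,y)=f(x)+g(y+h(x)).\] Then $F$ is bent if and only if for every $b\in V_n$ the function $G_b:V_m\to\mathbb{F}_p$, $G_b(x)=f(x)+\langle b,h(x)\rangle$, is bent. In that case the dual of $F$ is \[F^*(x,y)=G_y^*(x)+g^*(y),\] where $G_y^*$ and $g^*$ denote the duals of $G_y$ and $g$.
   Context: For $f:V_n\to\mathbb{F}_p$, the Walsh transform is $\widehat f(b)=\sum_{x\in V_n}\epsilon_p^{f(x)-\langle b,x\rangle}$ with $\epsilon_p=e^{2\pi i/p}$; on $V_m\times V_n$ the inner product is $\langle (a,b),(x,y)\rangle=\langle a,x\rangle+\langle b,y\rangle$. $f$ is bent if $|\widehat f(b)|=p^{n/2}$ for all $b$. For a bent $f$ there is a unique function $f^*:V_n\to\mathbb{F}_p$ (the dual) with $\widehat f(b)=\zeta_b\,p^{n/2}\epsilon_p^{f^*(b)}$ for some $\zeta_b\in\{\pm1,\pm i\}$ (for $p=2$: $\widehat f(b)=(-1)^{f^*(b)}2^{n/2}$; for odd $p$: $\zeta_b\in\{\pm1\}$ if $p^n\equiv1\pmod 4$ and $\zeta_b\in\{\pm i\}$ if $p^n\equiv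 3\pmod 4$). *)

theory Defs
  imports Complex_Main "Berlekamp_Zassenhaus.Finite_Field"
begin

text \<open>The prime field F_p is the type 'p mod_ring with CARD('p) = p prime (class prime_card).
  A vector space V over F_p is modelled as a finite abelian group type 'v; an inner product is a
  symmetric, biadditive (hence F_p-bilinear), nondegenerate form ip :: 'v => 'v => 'p mod_ring.
  (Nondegeneracy forces p x = 0, so 'v is an F_p-vector space; its dimension n is fixed by
  CARD('v) = p ^ n.)\<close>

definition eps :: "'p::prime_card mod_ring \<Rightarrow> complex" where
  "eps a = exp (2 * pi * \<i> * of_int (to_int_mod_ring a) / of_nat CARD('p))"

definition inner_prod :: "('v::ab_group_add \<Rightarrow> 'v \<Rightarrow> 'p::prime_card mod_ring) \<Rightarrow> bool" where
  "inner_prod ip \<longleftrightarrow>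
     (\<forall>x x' y. ip (x + x') y = ip x y + ip x' y) \<and>
     (\<forall>x y y'. ip x (y + y') = ip x y + ip x y') \<and>
     (\<forall>x y. ip x y = ip y x) \<and>
     (\<forall>x. (\<forall>y. ip x y = 0) \<longrightarrow> x = 0)"

definition walsh :: "('v::finite \<Rightarrow> 'v \<Rightarrow> 'p::prime_card mod_ring) \<Rightarrow> ('v \<Rightarrow> 'p mod_ring) \<Rightarrow> 'v \<Rightarrow> complex" where
  "walsh ip f b = (\<Sum>x\<in>UNIV. eps (f x - ip b x))"

definition bent :: "('v::finite \<Rightarrow> 'v \<Rightarrow> 'p::prime_card mod_ring) \<Rightarrow> nat \<Rightarrow> ('v \<Rightarrow> 'p mod_ring) \<Rightarrow> bool" where
  "bent ip n f \<longleftrightarrow> (\<forall>b. cmod (walsh ip f b) = sqrt (real CARD('p)) ^ n)"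

definition zeta_set :: "nat \<Rightarrow> nat \<Rightarrow> complex set" where
  "zeta_set p n = (if p = 2 then {1}
                   else if p ^ n mod 4 = 1 then {1, -1} else {\<i>, -\<i>})"

definition is_dual :: "('v::finite \<Rightarrow> 'v \<Rightarrow> 'p::prime_card mod_ring) \<Rightarrow> nat \<Rightarrow> ('v \<Rightarrow> 'p mod_ring) \<Rightarrow> ('v \<Rightarrow> 'p mod_ring) \<Rightarrow> bool" where
  "is_dual ip n f fs \<longleftrightarrow>
     (\<forall>b. \<exists>\<zeta>\<in>zeta_set CARD('p) n. walsh ip f b = \<zeta> * complex_of_real (sqrt (real CARD('p)) ^ n) * eps (fs b))"

definition prod_ip :: "('a \<Rightarrow> 'a \<Rightarrow> 'p::prime_card mod_ring) \<Rightarrow> ('b \<Rightarrow> 'b \<Rightarrow> 'p mod_ring) \<Rightarrow> 'a \<times> 'b \<Rightarrow> 'a \<times> 'b \<Rightarrow> 'p mod_ring" where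
  "prod_ip ipm ipn u v = ipm (fst u) (fst v) + ipn (snd u) (snd v)"

end

theory Submission
  imports Defs
begin

lemma eps_add: "eps (a + b :: 'p::prime_card mod_ring) = eps a * eps b"
proof -
  define p where "p = int CARD('p)"
  have p0: "p > 0" unfolding p_def by simp
  define k where "k = (to_int_mod_ring a + to_int_mod_ring b) div p"
  have e: "to_int_mod_ring (a+b) = to_int_mod_ring a + to_int_mod_ring b - k * p"
    unfolding k_def p_def to_int_mod_ring_add by (simp add: minus_div_mult_eq_mod[symmetric])
  have "eps (a+b) = exp (2 * pi * \<i> * of_int (to_int_mod_ring a) / of_nat CARD('p)
       + 2 * pi * \<i> * of_int (to_int_mod_ring b) / of_nat CARD('p) - 2 * pi * \<i> * of_int k)"
    unfolding eps_def e using p0 unfolding p_def by (simp add: field_simps)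
  also have "\<dots> = eps a * eps b / exp (2 * pi * \<i> * of_int k)"
    unfolding eps_def by (simp add: exp_add exp_diff)
  also have "exp (2 * pi * \<i> * of_int k) = 1"
  proof -
    have "exp (2 * pi * \<i> * of_int k) = cis (2 * pi * of_int k)"
      by (simp add: cis_conv_exp mult_ac)
    also have "\<dots> = 1" by (simp add: cis.ctr cos_int_2pin sin_int_2pin complex_eq_iff)
    finally show ?thesis .
  qed
  finally show ?thesis by simp
qed


lemma ip_diff2:
  assumes "inner_prod ip"
  shows "ip x (y - y') = ip x y - ip x y'"
proof -
  have "ip x y = ip x ((y - y') + y')" by simp
  also have "\<dots> = ip x (y - y') + ip x y'" using assms unfolding inner_prod_def by blast
  finally show ?thesis by (metis add_diff_cancel_right')
qed

lemma sum_shift: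
  fixes \<phi> :: "'v::{finite,ab_group_add} \<Rightarrow> complex"
  shows "(\<Sum>y\<in>UNIV. \<phi> (y + c)) = (\<Sum>z\<in>UNIV. \<phi> z)"
  by (rule sum.reindex_bij_witness[of _ "\<lambda>z. z - c" "\<lambda>y. y + c"]) auto

lemma walsh_F:
  fixes ipm :: "'vm::{finite,ab_group_add} \<Rightarrow> 'vm \<Rightarrow> 'p::prime_card mod_ring"
    and ipn :: "'vn::{finite,ab_group_add} \<Rightarrow> 'vn \<Rightarrow> 'p mod_ring"
  assumes "inner_prod ipn"
  shows "walsh (prod_ip ipm ipn) (\<lambda>(x, y). f x + g (y + h x)) (a, b)
     = walsh ipm (\<lambda>x. f x + ipn b (h x)) a * walsh ipn g b"
proof -
  have "walsh (prod_ip ipm ipn) (\<lambda>(x, y). f x + g (y + h x)) (a, b)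
     = (\<Sum>(x,y)\<in>UNIV \<times> UNIV. eps (f x + g (y + h x) - (ipm a x + ipn b y)))"
    unfolding walsh_def prod_ip_def UNIV_Times_UNIV[symmetric]
    by (intro sum.cong) auto
  also have "\<dots> = (\<Sum>x\<in>UNIV. \<Sum>y\<in>UNIV. eps (f x + g (y + h x) - (ipm a x + ipn b y)))"
    by (rule sum.cartesian_product[symmetric])
  also have "\<dots> = (\<Sum>x\<in>UNIV. \<Sum>z\<in>UNIV. eps (f x + g z - (ipm a x + ipn b (z - h x))))"
  proof (rule sum.cong[OF refl])
    fix x
    show "(\<Sum>y\<in>UNIV. eps (f x + g (y + h x) - (ipm a x + ipn b y)))
        = (\<Sum>z\<in>UNIV. eps (f x + g z - (ipm a x + ipn b (z - h x))))"
      using sum_shift[of "\<lambda>z. eps (f x + g z - (ipm a x + ipn b (z - h x)))" "h x"] by simp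
  qed
  also have "\<dots> = (\<Sum>x\<in>UNIV. \<Sum>z\<in>UNIV. eps (f x + ipn b (h x) - ipm a x) * eps (g z - ipn b z))"
  proof (intro sum.cong refl)
    fix x z
    have "f x + g z - (ipm a x + ipn b (z - h x)) = (f x + ipn b (h x) - ipm a x) + (g z - ipn b z)"
      using ip_diff2[OF assms] by (simp add: algebra_simps)
    then show "eps (f x + g z - (ipm a x + ipn b (z - h x))) = eps (f x + ipn b (h x) - ipm a x) * eps (g z - ipn b z)"
      by (simp only: eps_add)
  qed
  also have "\<dots> = walsh ipm (\<lambda>x. f x + ipn b (h x)) a * walsh ipn g b"
    unfolding walsh_def by (simp add: sum_product)
  finally show ?thesis .
qed

lemma odd_mod4: "odd (q::nat) \<Longrightarrow> q mod 4 = 1 \<or> q mod 4 = 3"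
  by presburger

lemma zeta_mult:
  assumes p: "prime p" and z1: "z1 \<in> zeta_set p m" and z2: "z2 \<in> zeta_set p n"
  shows "z1 * z2 \<in> zeta_set p (m + n)"
proof (cases "p = 2")
  case True
  then have "z1 = 1" "z2 = 1" using z1 z2 unfolding zeta_set_def by simp_all
  then show ?thesis using True unfolding zeta_set_def by simp
next
  case False
  have "2 < p" using prime_ge_2_nat[OF p] False by linarith
  then have "odd p" using prime_odd_nat[OF p] by blast
  then have om: "p ^ m mod 4 = 1 \<or> p ^ m mod 4 = 3" and on: "p ^ n mod 4 = 1 \<or> p ^ n mod 4 = 3"
    using odd_mod4[of "p ^ m"] odd_mod4[of "p ^ n"] by (simp_all only: even_power de_Morgan_conj simp_thms)
  have pr: "p ^ (m + n) mod 4 = ((p ^ m mod 4) * (p ^ n mod 4)) mod 4"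
    unfolding power_add mod_mult_eq ..
  have zs: "\<And>k. zeta_set p k = (if p ^ k mod 4 = 1 then {1, -1} else {\<i>, -\<i>})"
    using False unfolding zeta_set_def by simp
  have S1: "z1 * z2 \<in> {1, -1}" if "z1 \<in> {1, -1}" "z2 \<in> {1, -1}"
    using that by (elim insertE emptyE) simp_all
  have S2: "z1 * z2 \<in> {\<i>, -\<i>}" if "z1 \<in> {1, -1}" "z2 \<in> {\<i>, -\<i>}"
    using that by (elim insertE emptyE) simp_all
  have S3: "z1 * z2 \<in> {\<i>, -\<i>}" if "z1 \<in> {\<i>, -\<i>}" "z2 \<in> {1, -1}"
    using that by (elim insertE emptyE) simp_all
  have S4: "z1 * z2 \<in> {1, -1}" if "z1 \<in> {\<i>, -\<i>}" "z2 \<in> {\<i>, -\<i>}"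
    using that by (elim insertE emptyE) simp_all
  have z1': "z1 \<in> (if p ^ m mod 4 = 1 then {1, -1} else {\<i>, -\<i>})" using z1 zs by simp
  have z2': "z2 \<in> (if p ^ n mod 4 = 1 then {1, -1} else {\<i>, -\<i>})" using z2 zs by simp
  from om show ?thesis
  proof
    assume A: "p ^ m mod 4 = 1"
    from on show ?thesis
    proof
      assume B: "p ^ n mod 4 = 1"
      have C: "p ^ (m + n) mod 4 = 1" unfolding pr A B by simp
      show ?thesis unfolding zs C using S1 z1' z2' A B by simp
    next
      assume B: "p ^ n mod 4 = 3"
      have C: "p ^ (m + n) mod 4 = 3" unfolding pr A B by simp
      show ?thesis unfolding zs C using S2 z1' z2' A B by simp
    qed
  next
    assume A: "p ^ m mod 4 = 3"
    from on show ?thesis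
    proof
      assume B: "p ^ n mod 4 = 1"
      have C: "p ^ (m + n) mod 4 = 3" unfolding pr A B by simp
      show ?thesis unfolding zs C using S3 z1' z2' A B by simp
    next
      assume B: "p ^ n mod 4 = 3"
      have C: "p ^ (m + n) mod 4 = 1" unfolding pr A B by simp
      show ?thesis unfolding zs C using S4 z1' z2' A B by simp
    qed
  qed
qed

theorem theorem1:
  fixes ipm :: "'vm::{finite,ab_group_add} \<Rightarrow> 'vm \<Rightarrow> 'p::prime_card mod_ring"
    and ipn :: "'vn::{finite,ab_group_add} \<Rightarrow> 'vn \<Rightarrow> 'p mod_ring"
    and f :: "'vm \<Rightarrow> 'p mod_ring" and g :: "'vn \<Rightarrow> 'p mod_ring"
    and h :: "'vm \<Rightarrow> 'vn" and m n :: nat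
  assumes "m > 0" and "n > 0"
    and "CARD('vm) = CARD('p) ^ m" and "CARD('vn) = CARD('p) ^ n"
    and "inner_prod ipm" and "inner_prod ipn"
    and "bent ipm m f" and "bent ipn n g"
  shows "(bent (prod_ip ipm ipn) (m + n) (\<lambda>(x, y). f x + g (y + h x))
            \<longleftrightarrow> (\<forall>b. bent ipm m (\<lambda>x. f x + ipn b (h x))))
       \<and> (bent (prod_ip ipm ipn) (m + n) (\<lambda>(x, y). f x + g (y + h x)) \<longrightarrow>
            (\<forall>Gs gs. (\<forall>y. is_dual ipm m (\<lambda>x. f x + ipn y (h x)) (Gs y)) \<and> is_dual ipn n g gs \<longrightarrow>
               is_dual (prod_ip ipm ipn) (m + n) (\<lambda>(x, y). f x + g (y + h x))
                 (\<lambda>(x, y). Gs y x + gs y)))"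
proof -
  let ?F = "\<lambda>(x, y). f x + g (y + h x)"
  let ?G = "\<lambda>b x. f x + ipn b (h x)"
  let ?s = "sqrt (real CARD('p))"
  have wF: "\<And>a b. walsh (prod_ip ipm ipn) ?F (a, b) = walsh ipm (?G b) a * walsh ipn g b"
    using walsh_F[OF assms(6)] by blast
  have spos: "?s > 0" by simp
  have gb: "\<And>b. cmod (walsh ipn g b) = ?s ^ n" using assms(8) unfolding bent_def by blast
  have part1: "bent (prod_ip ipm ipn) (m + n) ?F \<longleftrightarrow> (\<forall>b. bent ipm m (?G b))"
  proof -
    have "bent (prod_ip ipm ipn) (m + n) ?F \<longleftrightarrow>
        (\<forall>a b. cmod (walsh ipm (?G b) a) * ?s ^ n = ?s ^ m * ?s ^ n)"
      unfolding bent_def by (simp add: wF norm_mult gb power_add)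
    also have "\<dots> \<longleftrightarrow> (\<forall>b a. cmod (walsh ipm (?G b) a) = ?s ^ m)"
      using spos by auto
    finally show ?thesis unfolding bent_def by simp
  qed
  have part2: "is_dual (prod_ip ipm ipn) (m + n) ?F (\<lambda>(x, y). Gs y x + gs y)"
    if H: "(\<forall>y. is_dual ipm m (?G y) (Gs y)) \<and> is_dual ipn n g gs" for Gs gs
    unfolding is_dual_def
  proof
    fix ab :: "'vm \<times> 'vn"
    obtain a b where ab: "ab = (a, b)" by (cases ab)
    obtain z1 where z1: "z1 \<in> zeta_set CARD('p) m"
      and w1: "walsh ipm (?G b) a = z1 * complex_of_real (?s ^ m) * eps (Gs b a)"
      using H unfolding is_dual_def by blast
    obtain z2 where z2: "z2 \<in> zeta_set CARD('p) n"
      and w2: "walsh ipn g b = z2 * complex_of_real (?s ^ n) * eps (gs b)"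
      using H unfolding is_dual_def by blast
    have "walsh (prod_ip ipm ipn) ?F ab = (z1 * z2) * complex_of_real (?s ^ (m + n)) * eps (Gs b a + gs b)"
      proof -
        have sp: "complex_of_real (?s ^ (m + n)) = complex_of_real (?s ^ m) * complex_of_real (?s ^ n)"
          by (simp add: power_add)
        show ?thesis unfolding ab wF w1 w2 eps_add sp by (simp only: mult_ac)
      qed
    moreover have "z1 * z2 \<in> zeta_set CARD('p) (m + n)"
      using zeta_mult[OF prime_card z1 z2] .
    ultimately show "\<exists>\<zeta>\<in>zeta_set CARD('p) (m + n). walsh (prod_ip ipm ipn) ?F ab
        = \<zeta> * complex_of_real (?s ^ (m + n)) * eps ((\<lambda>(x, y). Gs y x + gs y) ab)"
      unfolding ab by auto
  qed
  show ?thesis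
  proof (intro conjI impI allI)
    show "bent (prod_ip ipm ipn) (m + n) ?F = (\<forall>b. bent ipm m (?G b))" by (rule part1)
  next
    fix Gs gs assume "(\<forall>y. is_dual ipm m (?G y) (Gs y)) \<and> is_dual ipn n g gs"
    then show "is_dual (prod_ip ipm ipn) (m + n) ?F (\<lambda>(x, y). Gs y x + gs y)" by (rule part2)
  qed
qed

end
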